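(* Let $\mathbb{K}\in\{\mathbb{R},\mathbb{C}\}$, $\mathbf{R}_U\in\mathbb{K}^{n\times n}$ self-adjoint positive definite, $U:=\mathbb{K}^n$ with $\langle\mathbf{x},\mathbf{y}\rangle_U:=\langle\mathbf{R}_U\mathbf{x},\mathbf{y}\rangle$, norm $\|\cdot\|_U$, dual norm $\|\mathbf{y}\|_{U'}:=\langle\mathbf{y},\mathbf{R}_U^{-1}\mathbf{y}\rangle^{1/2}$. Fix $\mu$, $\mathbf{A}(\mu)\in\mathbb{K}^{n\times n}$, $\mathbf{b}(\mu)\in\mathbb{K}^n$, $\mathbf{\Theta}\in\mathbb{K}^{k\times n}$, a subspace $U_r\subseteq U$, a vector $\mathbf{u}_r(\mu)\in U_r$, and $\eta(\mu)>0$ with $\eta(\mu)\le\min_{\mathbf{x}\in U\setminus\{\mathbf{0}\}}\|\mathbf{A}(\mu)\mathbf{x}\|_{U'}/\|\mathbf{x}\|_U$. Let $\mathbf{r}(\mathbf{x};\mu):=\mathbf{b}(\mu)-\mathbf{A}(\mu)\mathbf{x}$, $Y_r(\mu):=U_r+\mathrm{span}\{\mathbf{R}_U^{-1}\mathbf{r}(\mathbf{x};\mu):\mathbf{x}\in U_r\}$, $\Delta(\mathbf{u}_r(\mu);\mu):=\|\mathbf{r}(\mathbf{u}_r(\mu);\mu)\|_{U'}/\eta(\mu)$ and $\Delta^{\mathbf{\Theta}}(\mathbf{u}_r(\mu);\mu):=\|\mathbf{\Theta}\mathbf{R}_U^{-1}\mathbf{r}(\mathbf{u}_r(\mu);\mu)\|/\eta(\mu)$.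 If for some $\varepsilon\in[0,1)$, $|\langle\mathbf{x},\mathbf{y}\rangle_U-\langle\mathbf{\Theta}\mathbf{x},\mathbf{\Theta}\mathbf{y}\rangle|\le\varepsilon\|\mathbf{x}\|_U\|\mathbf{y}\|_U$ for all $\mathbf{x},\mathbf{y}\in Y_r(\mu)$, then $$\sqrt{1-\varepsilon}\,\Delta(\mathbf{u}_r(\mu);\mu)\le\Delta^{\mathbf{\Theta}}(\mathbf{u}_r(\mu);\mu)\le\sqrt{1+\varepsilon}\,\Delta(\mathbf{u}_r(\mu);\mu).$$
   Context: $\langle\mathbf{x},\mathbf{y}\rangle=\mathbf{x}^{\mathrm{H}}\mathbf{y}$ is the canonical inner product and $\|\cdot\|$ the Euclidean norm. *)

theory Defs
  imports "HOL-Analysis.Analysis"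
begin

text \<open>The scalar field \<K> is represented as a subset of the complex numbers:
  either the reals (embedded) or all of the complex numbers.\<close>
definition is_scalar_field :: "complex set \<Rightarrow> bool" where
  "is_scalar_field K \<longleftrightarrow> K = range complex_of_real \<or> K = UNIV"

definition cinner :: "complex ^ 'n \<Rightarrow> complex ^ 'n \<Rightarrow> complex" where
  "cinner x y = (\<Sum>i\<in>UNIV. cnj (x $ i) * y $ i)"

definition Kvec :: "complex set \<Rightarrow> complex ^ 'n \<Rightarrow> bool" where
  "Kvec K x \<longleftrightarrow> (\<forall>i. x $ i \<in> K)"

definition Kmat :: "complex set \<Rightarrow> complex ^ 'n ^ 'm \<Rightarrow> bool" where
  "Kmat K M \<longleftrightarrow> (\<forall>i j. M $ i $ j \<in> K)"

definition Kspace :: "complex set \<Rightarrow> (complex ^ 'n) set" where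
  "Kspace K = {x. Kvec K x}"

definition Ksubspace :: "complex set \<Rightarrow> (complex ^ 'n) set \<Rightarrow> bool" where
  "Ksubspace K S \<longleftrightarrow> 0 \<in> S \<and> (\<forall>x\<in>S. \<forall>y\<in>S. x + y \<in> S)
     \<and> (\<forall>c\<in>K. \<forall>x\<in>S. c *s x \<in> S)"

definition Kspan :: "complex set \<Rightarrow> (complex ^ 'n) set \<Rightarrow> (complex ^ 'n) set" where
  "Kspan K X = \<Inter>{S. Ksubspace K S \<and> X \<subseteq> S}"

definition subspace_sum :: "(complex ^ 'n) set \<Rightarrow> (complex ^ 'n) set \<Rightarrow> (complex ^ 'n) set" where
  "subspace_sum S T = {s + t | s t. s \<in> S \<and> t \<in> T}"

definition self_adjoint :: "complex ^ 'n ^ 'n \<Rightarrow> bool" where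
  "self_adjoint M \<longleftrightarrow> (\<forall>i j. M $ i $ j = cnj (M $ j $ i))"

definition pos_def :: "complex set \<Rightarrow> complex ^ 'n ^ 'n \<Rightarrow> bool" where
  "pos_def K M \<longleftrightarrow> (\<forall>x\<in>Kspace K. x \<noteq> 0 \<longrightarrow>
      cinner (M *v x) x \<in> \<real> \<and> 0 < Re (cinner (M *v x) x))"

definition innerU :: "complex ^ 'n ^ 'n \<Rightarrow> complex ^ 'n \<Rightarrow> complex ^ 'n \<Rightarrow> complex" where
  "innerU R x y = cinner (R *v x) y"

definition normU :: "complex ^ 'n ^ 'n \<Rightarrow> complex ^ 'n \<Rightarrow> real" where
  "normU R x = sqrt (Re (innerU R x x))"

definition dualnormU :: "complex ^ 'n ^ 'n \<Rightarrow> complex ^ 'n \<Rightarrow> real" where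
  "dualnormU R y = sqrt (Re (cinner y (matrix_inv R *v y)))"

definition resid :: "complex ^ 'n ^ 'n \<Rightarrow> complex ^ 'n \<Rightarrow> complex ^ 'n \<Rightarrow> complex ^ 'n" where
  "resid A b x = b - A *v x"

definition Yr :: "complex set \<Rightarrow> complex ^ 'n ^ 'n \<Rightarrow> complex ^ 'n ^ 'n \<Rightarrow> complex ^ 'n
                   \<Rightarrow> (complex ^ 'n) set \<Rightarrow> (complex ^ 'n) set" where
  "Yr K R A b Ur = subspace_sum Ur (Kspan K ((\<lambda>x. matrix_inv R *v resid A b x) ` Ur))"

definition Delta :: "complex ^ 'n ^ 'n \<Rightarrow> complex ^ 'n ^ 'n \<Rightarrow> complex ^ 'n \<Rightarrow> real
                     \<Rightarrow> complex ^ 'n \<Rightarrow> real" where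
  "Delta R A b \<eta> u = dualnormU R (resid A b u) / \<eta>"

definition DeltaTheta :: "complex ^ 'n ^ 'k \<Rightarrow> complex ^ 'n ^ 'n \<Rightarrow> complex ^ 'n ^ 'n
                     \<Rightarrow> complex ^ 'n \<Rightarrow> real \<Rightarrow> complex ^ 'n \<Rightarrow> real" where
  "DeltaTheta \<Theta> R A b \<eta> u = norm (\<Theta> *v (matrix_inv R *v resid A b u)) / \<eta>"

end

theory Submission
  imports Defs
begin


lemma real_ker:
  fixes R :: "complex^'n^'n"
  assumes im: "\<And>i j. Im (R$i$j) = 0" and Rx: "R *v x = 0"
  shows "R *v (\<chi> i. complex_of_real (Re (x$i))) = 0" "R *v (\<chi> i. complex_of_real (Im (x$i))) = 0"
proof -
  have re: "(\<Sum>j\<in>UNIV. Re (R$i$j) * Re (x$j)) = 0" and imm: "(\<Sum>j\<in>UNIV. Re (R$i$j) * Im (x$j)) = 0" for i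
  proof -
    have "(R *v x) $ i = 0" using Rx by simp
    hence "Re ((R *v x) $ i) = 0" "Im ((R *v x) $ i) = 0" by auto
    thus "(\<Sum>j\<in>UNIV. Re (R$i$j) * Re (x$j)) = 0" "(\<Sum>j\<in>UNIV. Re (R$i$j) * Im (x$j)) = 0"
      by (auto simp: matrix_vector_mult_def im)
  qed
  show "R *v (\<chi> i. complex_of_real (Re (x$i))) = 0" "R *v (\<chi> i. complex_of_real (Im (x$i))) = 0"
    by (auto simp: vec_eq_iff matrix_vector_mult_def complex_eq_iff im re imm)
qed


lemma R_inv:
  fixes R :: "complex^'n^'n"
  assumes field: "is_scalar_field K" and R_K: "Kmat K R" and R_pd: "pos_def K R"
  shows "R ** matrix_inv R = mat 1"
proof -
  have ker: "\<forall>x. R *v x = 0 \<longrightarrow> x = 0"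
  proof (intro allI impI)
    fix x :: "complex^'n" assume Rx: "R *v x = 0"
    have nz: "y = 0" if "y \<in> Kspace K" "R *v y = 0" for y
      using R_pd that unfolding pos_def_def by (auto simp: cinner_def)
    show "x = 0"
    proof (cases "K = UNIV")
      case True thus ?thesis using nz[of x] Rx by (simp add: Kspace_def Kvec_def)
    next
      case False
      hence K: "K = range complex_of_real" using field by (auto simp: is_scalar_field_def)
      have im: "Im (R$i$j) = 0" for i j using R_K K unfolding Kmat_def by (metis Im_complex_of_real imageE)
      have "(\<chi> i. complex_of_real (Re (x$i))) = 0"
        by (rule nz) (auto simp: Kspace_def Kvec_def K real_ker(1)[OF im Rx])
      moreover have "(\<chi> i. complex_of_real (Im (x$i))) = 0"
        by (rule nz) (auto simp: Kspace_def Kvec_def K real_ker(2)[OF im Rx])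
      ultimately show ?thesis by (auto simp: vec_eq_iff complex_eq_iff)
    qed
  qed
  hence "invertible R" using matrix_left_invertible_ker invertible_left_inverse by blast
  hence "\<exists>A'. R ** A' = mat 1 \<and> A' ** R = mat 1" by (simp add: invertible_def)
  thus ?thesis unfolding matrix_inv_def by (metis (mono_tags, lifting) someI_ex)
qed

lemma cinner_self: "cinner v v = complex_of_real ((norm v)^2)"
proof -
  have "cinner v v = (\<Sum>i\<in>UNIV. complex_of_real ((cmod (v$i))^2))"
    unfolding cinner_def by (intro sum.cong refl) (metis complex_norm_square mult.commute)
  also have "\<dots> = complex_of_real (\<Sum>i\<in>UNIV. (cmod (v$i))^2)"
    by (simp only: of_real_sum)
  also have "\<dots> = complex_of_real ((norm v)^2)"
    by (simp add: norm_vec_def L2_set_def sum_nonneg)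
  finally show ?thesis .
qed


theorem corollary4p5:
  fixes K :: "complex set"
    and R A :: "complex ^ 'n ^ 'n"
    and b ur :: "complex ^ 'n"
    and \<Theta> :: "complex ^ 'n ^ 'k"
    and Ur :: "(complex ^ 'n) set"
    and \<eta> \<epsilon> :: real
  assumes field: "is_scalar_field K"
    and R_K: "Kmat K R" and R_sa: "self_adjoint R" and R_pd: "pos_def K R"
    and A_K: "Kmat K A" and b_K: "Kvec K b" and Theta_K: "Kmat K \<Theta>"
    and Ur_sub: "Ksubspace K Ur" and Ur_U: "Ur \<subseteq> Kspace K"
    and ur_in: "ur \<in> Ur"
    and eta_pos: "\<eta> > 0"
    and eta_le: "\<forall>x\<in>Kspace K. x \<noteq> 0 \<longrightarrow> \<eta> \<le> dualnormU R (A *v x) / normU R x"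
    and eps: "0 \<le> \<epsilon>" "\<epsilon> < 1"
    and embed: "\<forall>x\<in>Yr K R A b Ur. \<forall>y\<in>Yr K R A b Ur.
        cmod (innerU R x y - cinner (\<Theta> *v x) (\<Theta> *v y)) \<le> \<epsilon> * normU R x * normU R y"
  shows "sqrt (1 - \<epsilon>) * Delta R A b \<eta> ur \<le> DeltaTheta \<Theta> R A b \<eta> ur
       \<and> DeltaTheta \<Theta> R A b \<eta> ur \<le> sqrt (1 + \<epsilon>) * Delta R A b \<eta> ur"
proof -
  define y where "y = matrix_inv R *v resid A b ur"
  have Ry: "R *v y = resid A b ur"
    using R_inv[OF field R_K R_pd] by (simp add: y_def matrix_vector_mul_assoc)
  have "y \<in> Kspan K ((\<lambda>x. matrix_inv R *v resid A b x) ` Ur)"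
    unfolding Kspan_def y_def using ur_in by blast
  moreover have "0 \<in> Ur" using Ur_sub by (simp add: Ksubspace_def)
  ultimately have yY: "y \<in> Yr K R A b Ur"
    unfolding Yr_def subspace_sum_def by force
  define a where "a = innerU R y y"
  define c where "c = (norm (\<Theta> *v y))^2"
  have E0: "cmod (a - cinner (\<Theta> *v y) (\<Theta> *v y)) \<le> \<epsilon> * normU R y * normU R y"
    using embed yY unfolding a_def by blast
  have E: "cmod (a - complex_of_real c) \<le> \<epsilon> * \<bar>Re a\<bar>"
    using E0 unfolding c_def cinner_self normU_def a_def
    by (simp add: mult.assoc)
  have ac: "\<bar>Re a - c\<bar> \<le> \<epsilon> * \<bar>Re a\<bar>"
    using E abs_Re_le_cmod[of "a - complex_of_real c"] by simp
  have c0: "c \<ge> 0" unfolding c_def by simp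
  have a0: "Re a \<ge> 0"
  proof (rule ccontr)
    assume "\<not> ?thesis"
    hence neg: "Re a < 0" by simp
    have "(1 - \<epsilon>) * Re a < 0" using neg eps by (simp add: mult_pos_neg)
    moreover have "c \<le> (1 - \<epsilon>) * Re a" using ac neg by (auto simp: abs_if algebra_simps split: if_splits)
    ultimately show False using c0 by linarith
  qed
  have lo: "(1 - \<epsilon>) * Re a \<le> c" and hi: "c \<le> (1 + \<epsilon>) * Re a"
    using ac a0 by (auto simp: abs_if algebra_simps split: if_splits)
  have D: "Delta R A b \<eta> ur = sqrt (Re a) / \<eta>"
    unfolding Delta_def dualnormU_def a_def innerU_def Ry y_def[symmetric] by simp
  have DT: "DeltaTheta \<Theta> R A b \<eta> ur = sqrt c / \<eta>"
    unfolding DeltaTheta_def c_def y_def[symmetric] by simp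
  have "sqrt (1 - \<epsilon>) * sqrt (Re a) \<le> sqrt c"
    using lo by (simp add: real_sqrt_mult[symmetric])
  moreover have "sqrt c \<le> sqrt (1 + \<epsilon>) * sqrt (Re a)"
    using hi by (simp add: real_sqrt_mult[symmetric])
  ultimately show ?thesis unfolding D DT using eta_pos
    by (simp add: divide_right_mono)
qed

end
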